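(* Let $0 \le \alpha \le \beta < \infty$ and let $\varphi\colon\mathbb{R}\to\mathbb{R}$ satisfy $\alpha \le \frac{\varphi(a)-\varphi(b)}{a-b} \le \beta$ for all $a \ne b$; let $\phi$ denote componentwise application of $\varphi$. Let $L \ge 1$ and consider matrices $W_k$ ($k = 0,\dots,L$, with $W_L = I$), $H_k$, $G_k$ ($k = 0,\dots,L-1$) of compatible dimensions, and the network defined from input $x_0$ by $$y_k = W_k x_k \ (k = 0,\dots,L), \qquad x_{k+1} = H_k x_k + G_k \phi(y_k) \ (k = 0,\dots,L-1).$$ Let $\hat{H}_k := H_k + \frac{\alpha+\beta}{2} G_k W_k$, with the convention that $\hat H_k\cdots\hat H_{j+1} = I$ when $j=k$. Fix $p\in[1,\infty]$, use the $\ell_p$ norm on all vector spaces and the induced operator norm $\|\cdot\|$ on matrices. Define $m_0 := \|W_0\|$ and recursively, for $k = 0,\dots,L-1$, $$m_{k+1} := \|W_{k+1}\hat{H}_k \cdots \hat{H}_0\| + \frac{\beta - \alpha}{2}\sum_{j=0}^{k} \|W_{k+1}\hat{H}_k \cdots \hat{H}_{j+1} G_j\|\, m_j.$$ Then for each $k = 0,\dots,L$, $m_k$ is a Lipschitz constant of the map $x_0 \mapsto y_k$, i.e. $\|y_k(x_0) - y_k(x_0')\|_p \le m_k \|x_0 - x_0'\|_p$ for all inputs $x_0, x_0'$. In particular, $m_L$ is a Lipschitz constant of the network map $x_0 \mapsto y_L = x_L$. *)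

theory Defs
  imports "Jordan_Normal_Form.Matrix" "HOL-Library.Extended_Real"
begin

definition lp_norm :: "ereal \<Rightarrow> real vec \<Rightarrow> real" where
  "lp_norm p v =
     (if p = \<infinity> then Max (insert 0 {\<bar>v $ i\<bar> | i. i < dim_vec v})
      else (\<Sum>i<dim_vec v. \<bar>v $ i\<bar> powr real_of_ereal p) powr (1 / real_of_ereal p))"

definition op_norm :: "ereal \<Rightarrow> real mat \<Rightarrow> real" where
  "op_norm p A = Sup {lp_norm p (A *\<^sub>v x) | x. x \<in> carrier_vec (dim_col A) \<and> lp_norm p x \<le> 1}"

primrec net_x :: "(real \<Rightarrow> real) \<Rightarrow> (nat \<Rightarrow> real mat) \<Rightarrow> (nat \<Rightarrow> real mat) \<Rightarrow> (nat \<Rightarrow> real mat)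
                  \<Rightarrow> nat \<Rightarrow> real vec \<Rightarrow> real vec" where
  "net_x \<phi> W H G 0 x0 = x0"
| "net_x \<phi> W H G (Suc k) x0 =
     H k *\<^sub>v net_x \<phi> W H G k x0 + G k *\<^sub>v map_vec \<phi> (W k *\<^sub>v net_x \<phi> W H G k x0)"

definition net_y :: "(real \<Rightarrow> real) \<Rightarrow> (nat \<Rightarrow> real mat) \<Rightarrow> (nat \<Rightarrow> real mat) \<Rightarrow> (nat \<Rightarrow> real mat)
                  \<Rightarrow> nat \<Rightarrow> real vec \<Rightarrow> real vec" where
  "net_y \<phi> W H G k x0 = W k *\<^sub>v net_x \<phi> W H G k x0"

definition Hhat :: "real \<Rightarrow> real \<Rightarrow> (nat \<Rightarrow> real mat) \<Rightarrow> (nat \<Rightarrow> real mat) \<Rightarrow> (nat \<Rightarrow> real mat)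
                    \<Rightarrow> nat \<Rightarrow> real mat" where
  "Hhat \<alpha> \<beta> W H G k = H k + ((\<alpha> + \<beta>) / 2) \<cdot>\<^sub>m (G k * W k)"

text \<open>hchain n Hh i m = Hh (i+m-1) * ... * Hh i, and the identity of size n i when m = 0.
  Thus Hhat_k ... Hhat_(j+1) = hchain n Hh (j+1) (k-j) and Hhat_k ... Hhat_0 = hchain n Hh 0 (k+1).\<close>
primrec hchain :: "(nat \<Rightarrow> nat) \<Rightarrow> (nat \<Rightarrow> real mat) \<Rightarrow> nat \<Rightarrow> nat \<Rightarrow> real mat" where
  "hchain n Hh i 0 = 1\<^sub>m (n i)"
| "hchain n Hh i (Suc m) = Hh (i + m) * hchain n Hh i m"

fun lip_m :: "ereal \<Rightarrow> real \<Rightarrow> real \<Rightarrow> (nat \<Rightarrow> nat) \<Rightarrow> (nat \<Rightarrow> real mat) \<Rightarrow> (nat \<Rightarrow> real mat)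
              \<Rightarrow> (nat \<Rightarrow> real mat) \<Rightarrow> nat \<Rightarrow> real" where
  "lip_m p \<alpha> \<beta> n W H G 0 = op_norm p (W 0)"
| "lip_m p \<alpha> \<beta> n W H G (Suc k) =
     op_norm p (W (Suc k) * hchain n (Hhat \<alpha> \<beta> W H G) 0 (Suc k))
     + (\<beta> - \<alpha>) / 2 * (\<Sum>j\<in>{0..k}.
          op_norm p (W (Suc k) * hchain n (Hhat \<alpha> \<beta> W H G) (Suc j) (k - j) * G j)
          * lip_m p \<alpha> \<beta> n W H G j)"

end

theory Submission imports Defs "HOL-Analysis.Convex" begin

lemma q_ge1: "1 \<le> p \<Longrightarrow> p \<noteq> \<infinity> \<Longrightarrow> 1 \<le> real_of_ereal p"
  by (cases p) auto

lemma lp_fin: "p \<noteq> \<infinity> \<Longrightarrow> lp_norm p v = (\<Sum>i<dim_vec v. \<bar>v $ i\<bar> powr real_of_ereal p) powr (1 / real_of_ereal p)"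
  by (simp add: lp_norm_def)

lemma lp_inf_le_iff: "lp_norm \<infinity> v \<le> B \<longleftrightarrow> 0 \<le> B \<and> (\<forall>i<dim_vec v. \<bar>v $ i\<bar> \<le> B)"
  unfolding lp_norm_def by (auto simp: Max_le_iff)

lemma lp_inf_ge: "i < dim_vec v \<Longrightarrow> \<bar>v $ i\<bar> \<le> lp_norm \<infinity> v" "0 \<le> lp_norm \<infinity> v"
  unfolding lp_norm_def by (auto intro: Max_ge)

lemma lp_inf_cases: "lp_norm \<infinity> v = 0 \<or> (\<exists>i<dim_vec v. lp_norm \<infinity> v = \<bar>v $ i\<bar>)"
proof -
  have "Max (insert 0 {\<bar>v $ i\<bar> | i. i < dim_vec v}) \<in> insert 0 {\<bar>v $ i\<bar> | i. i < dim_vec v}"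
    by (rule Max_in) auto
  then show ?thesis unfolding lp_norm_def by auto
qed

lemma lp_nonneg: "0 \<le> lp_norm p v"
  by (cases "p = \<infinity>") (auto simp: lp_inf_ge lp_fin)

lemma lp_ge_comp: assumes "1 \<le> p" "i < dim_vec v" shows "\<bar>v $ i\<bar> \<le> lp_norm p v"
proof (cases "p = \<infinity>")
  case True then show ?thesis using assms lp_inf_ge by simp
next
  case False
  define q where "q = real_of_ereal p"
  have q: "1 \<le> q" using q_ge1 assms False q_def by auto
  have "\<bar>v $ i\<bar> powr q \<le> (\<Sum>j<dim_vec v. \<bar>v $ j\<bar> powr q)"
    by (rule member_le_sum) (use assms in auto)
  then have "(\<bar>v $ i\<bar> powr q) powr (1/q) \<le> (\<Sum>j<dim_vec v. \<bar>v $ j\<bar> powr q) powr (1/q)"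
    using q by (intro powr_mono2) (auto intro: sum_nonneg)
  moreover have "(\<bar>v $ i\<bar> powr q) powr (1/q) = \<bar>v $ i\<bar>" using q by (simp add: powr_powr)
  ultimately show ?thesis using False by (simp add: lp_fin q_def)
qed

lemma lp_mono: assumes "1 \<le> p" "dim_vec u = dim_vec v" "\<And>i. i < dim_vec v \<Longrightarrow> \<bar>u $ i\<bar> \<le> \<bar>v $ i\<bar>"
  shows "lp_norm p u \<le> lp_norm p v"
proof (cases "p = \<infinity>")
  case True then show ?thesis using assms by (auto simp: lp_inf_le_iff lp_inf_ge intro: order_trans[OF _ lp_inf_ge(1)])
next
  case False
  define q where "q = real_of_ereal p"
  have q: "1 \<le> q" using q_ge1 assms False q_def by auto
  have "(\<Sum>j<dim_vec u. \<bar>u $ j\<bar> powr q) \<le> (\<Sum>j<dim_vec v. \<bar>v $ j\<bar> powr q)"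
    using assms q by (auto intro!: sum_mono powr_mono2)
  then show ?thesis using False q by (auto simp: lp_fin q_def[symmetric] intro!: powr_mono2 sum_nonneg)
qed

lemma lp_smult: assumes "1 \<le> p" shows "lp_norm p (c \<cdot>\<^sub>v v) = \<bar>c\<bar> * lp_norm p v"
proof (cases "p = \<infinity>")
  case True
  show ?thesis
  proof (rule order_antisym)
    show "lp_norm p (c \<cdot>\<^sub>v v) \<le> \<bar>c\<bar> * lp_norm p v"
      using True by (auto simp: lp_inf_le_iff abs_mult lp_inf_ge intro!: mult_left_mono)
    show "\<bar>c\<bar> * lp_norm p v \<le> lp_norm p (c \<cdot>\<^sub>v v)"
    proof (rule disjE[OF lp_inf_cases[of v]])
      assume "lp_norm \<infinity> v = 0" then show ?thesis using True by (simp add: lp_nonneg)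
    next
      assume "\<exists>i<dim_vec v. lp_norm \<infinity> v = \<bar>v $ i\<bar>"
      then obtain i where "i < dim_vec v" "lp_norm \<infinity> v = \<bar>v $ i\<bar>" by auto
      then show ?thesis using True lp_inf_ge(1)[of i "c \<cdot>\<^sub>v v"] by (simp add: abs_mult)
    qed
  qed
next
  case False
  define q where "q = real_of_ereal p"
  have q: "1 \<le> q" using q_ge1 assms False q_def by auto
  have "(\<Sum>j<dim_vec v. \<bar>(c \<cdot>\<^sub>v v) $ j\<bar> powr q) = \<bar>c\<bar> powr q * (\<Sum>j<dim_vec v. \<bar>v $ j\<bar> powr q)"
    by (simp add: abs_mult powr_mult sum_distrib_left)
  then have "lp_norm p (c \<cdot>\<^sub>v v) = (\<bar>c\<bar> powr q) powr (1/q) * (\<Sum>j<dim_vec v. \<bar>v $ j\<bar> powr q) powr (1/q)"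
    using False by (simp add: lp_fin q_def[symmetric] powr_mult sum_nonneg)
  also have "(\<bar>c\<bar> powr q) powr (1/q) = \<bar>c\<bar>" using q by (simp add: powr_powr)
  finally show ?thesis using False by (simp add: lp_fin q_def)
qed

lemma powr_le_self: "0 \<le> x \<Longrightarrow> x \<le> 1 \<Longrightarrow> 1 \<le> (q::real) \<Longrightarrow> x powr q \<le> x"
proof (cases "x = 0")
  case False
  assume "0 \<le> x" "x \<le> 1" "1 \<le> q"
  then have "x powr q \<le> x powr 1" using False by (intro powr_mono') auto
  then show ?thesis using \<open>0 \<le> x\<close> by simp
qed simp

lemma conv_powr: fixes a b l q :: real assumes "0\<le>a" "0\<le>b" "0\<le>l" "l\<le>1" "1\<le>q"
  shows "(l*a+(1-l)*b) powr q \<le> l * a powr q + (1-l) * b powr q"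
proof -
  consider "a = 0" | "b = 0" | "a > 0" "b > 0" using assms(1,2) by (metis le_less)
  then show ?thesis
  proof cases
    case 1
    have "((1-l)*b) powr q = (1-l) powr q * b powr q" using assms by (simp add: powr_mult)
    also have "\<dots> \<le> (1-l) * b powr q" using assms powr_le_self[of "1-l" q] by (intro mult_right_mono) auto
    finally show ?thesis using 1 by simp
  next
    case 2
    have "(l*a) powr q = l powr q * a powr q" using assms by (simp add: powr_mult)
    also have "\<dots> \<le> l * a powr q" using assms powr_le_self[of "l" q] by (intro mult_right_mono) auto
    finally show ?thesis using 2 by simp
  next
    case 3
    have "(\<lambda>x. x powr q) ((1 - (1-l)) *\<^sub>R a + (1-l) *\<^sub>R b) \<le> (1 - (1-l)) * (\<lambda>x. x powr q) a + (1-l) * (\<lambda>x. x powr q) b"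
      by (rule convex_onD[OF powr_convex]) (use assms 3 in auto)
    then show ?thesis by simp
  qed
qed

lemma lp_le_sum: assumes "1 \<le> p" shows "lp_norm p v \<le> (\<Sum>i<dim_vec v. \<bar>v $ i\<bar>)"
proof (cases "p = \<infinity>")
  case True then show ?thesis
    by (auto simp: lp_inf_le_iff sum_nonneg intro!: member_le_sum)
next
  case False
  define q where "q = real_of_ereal p"
  have q: "1 \<le> q" using q_ge1 assms False q_def by auto
  define T where "T = (\<Sum>i<dim_vec v. \<bar>v $ i\<bar>)"
  have T0: "0 \<le> T" unfolding T_def by (simp add: sum_nonneg)
  show ?thesis
  proof (cases "T = 0")
    case True
    then have "\<forall>i<dim_vec v. \<bar>v $ i\<bar> = 0" unfolding T_def by (subst (asm) sum_nonneg_eq_0_iff) auto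
    then show ?thesis using False by (simp add: lp_fin)
  next
    case Tne: False
    then have Tp: "T > 0" using T0 by simp
    have le1: "\<bar>v $ i\<bar> \<le> T" if "i < dim_vec v" for i
      unfolding T_def by (rule member_le_sum) (use that in auto)
    have "(\<Sum>i<dim_vec v. \<bar>v $ i\<bar> powr q) = (\<Sum>i<dim_vec v. T powr q * (\<bar>v $ i\<bar> / T) powr q)"
      using Tp by (intro sum.cong) (auto simp: powr_divide)
    also have "\<dots> \<le> (\<Sum>i<dim_vec v. T powr q * (\<bar>v $ i\<bar> / T))"
      using Tp le1 q by (intro sum_mono mult_left_mono powr_le_self) auto
    also have "\<dots> = T powr q * (T / T)"
      by (simp add: sum_distrib_left[symmetric] sum_divide_distrib[symmetric] T_def)
    also have "\<dots> = T powr q" using Tp by simp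
    finally have "(\<Sum>i<dim_vec v. \<bar>v $ i\<bar> powr q) powr (1/q) \<le> (T powr q) powr (1/q)"
      using q by (intro powr_mono2) (auto intro: sum_nonneg)
    also have "\<dots> = T" using q Tp by (simp add: powr_powr)
    finally show ?thesis using False by (simp add: lp_fin q_def T_def)
  qed
qed

lemma lp_zero_imp: assumes "1 \<le> p" "lp_norm p u = 0" "i < dim_vec u" shows "u $ i = 0"
  using lp_ge_comp[OF assms(1,3)] assms(2) by simp

lemma lp_triangle: assumes "1 \<le> p" "dim_vec u = dim_vec v"
  shows "lp_norm p (u + v) \<le> lp_norm p u + lp_norm p v"
proof (cases "p = \<infinity>")
  case True then show ?thesis using assms
    by (auto simp: lp_inf_le_iff lp_inf_ge intro!: add_nonneg_nonneg
        order_trans[OF abs_triangle_ineq] add_mono)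
next
  case False
  define q where "q = real_of_ereal p"
  have q: "1 \<le> q" using q_ge1 assms False q_def by auto
  define a where "a = lp_norm p u"
  define b where "b = lp_norm p v"
  have a0: "0 \<le> a" "0 \<le> b" unfolding a_def b_def by (auto simp: lp_nonneg)
  consider "a = 0" | "b = 0" | "a > 0" "b > 0" using a0 by linarith
  then show ?thesis
  proof cases
    case 1
    then have "lp_norm p (u + v) \<le> lp_norm p v"
      using assms lp_zero_imp[OF assms(1), of u] by (intro lp_mono) (auto simp: a_def)
    then show ?thesis using a0 1 a_def by simp
  next
    case 2
    then have "lp_norm p (u + v) \<le> lp_norm p u"
      using assms lp_zero_imp[OF assms(1), of v] by (intro lp_mono) (auto simp: b_def)
    then show ?thesis using a0 2 b_def by simp
  next
    case 3
    define l where "l = a / (a+b)"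
    have l: "0 \<le> l" "l \<le> 1" "1 - l = b / (a+b)" using 3 by (auto simp: l_def field_simps)
    define Su where "Su = (\<Sum>i<dim_vec u. \<bar>u $ i\<bar> powr q)"
    define Sv where "Sv = (\<Sum>i<dim_vec v. \<bar>v $ i\<bar> powr q)"
    have Su: "a powr q = Su" using False q unfolding a_def Su_def
      by (simp add: lp_fin q_def[symmetric] powr_powr sum_nonneg)
    have Sv: "b powr q = Sv" using False q unfolding b_def Sv_def
      by (simp add: lp_fin q_def[symmetric] powr_powr sum_nonneg)
    have pt: "\<bar>(u+v) $ i\<bar> powr q \<le> (a+b) powr q * (l * (\<bar>u $ i\<bar> powr q / Su) + (1-l) * (\<bar>v $ i\<bar> powr q / Sv))"
      if i: "i < dim_vec v" for i
    proof -
      have "\<bar>(u+v) $ i\<bar> \<le> \<bar>u $ i\<bar> + \<bar>v $ i\<bar>" using i assms by simp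
      also have "\<dots> = (a+b) * (l * (\<bar>u $ i\<bar> / a) + (1-l) * (\<bar>v $ i\<bar> / b))"
      proof -
        have ab: "a + b \<noteq> 0" "a \<noteq> 0" "b \<noteq> 0" using 3 by auto
        have e1: "(a+b) * (l * (x/a)) = x" for x unfolding l_def using ab by simp
        have e2: "(a+b) * ((1-l) * (x/b)) = x" for x unfolding l(3) using ab by simp
        show ?thesis by (simp only: distrib_left e1 e2)
      qed
      finally have "\<bar>(u+v) $ i\<bar> powr q \<le> ((a+b) * (l * (\<bar>u $ i\<bar> / a) + (1-l) * (\<bar>v $ i\<bar> / b))) powr q"
        using q by (intro powr_mono2) auto
      also have "\<dots> = (a+b) powr q * (l * (\<bar>u $ i\<bar> / a) + (1-l) * (\<bar>v $ i\<bar> / b)) powr q"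
        using 3 l by (intro powr_mult)
      also have "\<dots> \<le> (a+b) powr q * (l * (\<bar>u $ i\<bar> / a) powr q + (1-l) * (\<bar>v $ i\<bar> / b) powr q)"
        using 3 l q by (intro mult_left_mono conv_powr) auto
      also have "\<dots> = (a+b) powr q * (l * (\<bar>u $ i\<bar> powr q / Su) + (1-l) * (\<bar>v $ i\<bar> powr q / Sv))"
        using 3 by (simp add: powr_divide Su Sv)
      finally show ?thesis .
    qed
    have Supos: "Su > 0" "Sv > 0" using Su Sv 3 by auto
    have "(\<Sum>i<dim_vec v. \<bar>(u+v) $ i\<bar> powr q) \<le> (\<Sum>i<dim_vec v. (a+b) powr q * (l * (\<bar>u $ i\<bar> powr q / Su) + (1-l) * (\<bar>v $ i\<bar> powr q / Sv)))"
      by (intro sum_mono pt) auto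
    also have "\<dots> = (a+b) powr q * (l * (Su / Su) + (1-l) * (Sv/Sv))"
      using assms(2) by (simp add: sum_distrib_left[symmetric] sum.distrib sum_divide_distrib[symmetric] Su_def Sv_def)
    also have "\<dots> = (a+b) powr q" using Supos by simp
    finally have "(\<Sum>i<dim_vec v. \<bar>(u+v) $ i\<bar> powr q) powr (1/q) \<le> ((a+b) powr q) powr (1/q)"
      using q by (intro powr_mono2) (auto intro: sum_nonneg)
    also have "\<dots> = a + b" using q 3 by (simp add: powr_powr)
    finally show ?thesis using False assms(2) by (simp add: lp_fin q_def a_def b_def)
  qed
qed

lemma mv_bound: assumes "1 \<le> p" "dim_vec x = dim_col A"
  shows "lp_norm p (A *\<^sub>v x) \<le> (\<Sum>i<dim_row A. \<Sum>j<dim_col A. \<bar>A $$ (i,j)\<bar> * \<bar>x $ j\<bar>)"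
proof -
  have "lp_norm p (A *\<^sub>v x) \<le> (\<Sum>i<dim_row A. \<bar>(A *\<^sub>v x) $ i\<bar>)"
    using lp_le_sum[OF assms(1), of "A *\<^sub>v x"] by (simp only: dim_mult_mat_vec)
  also have "\<dots> \<le> (\<Sum>i<dim_row A. \<Sum>j<dim_col A. \<bar>A $$ (i,j)\<bar> * \<bar>x $ j\<bar>)"
  proof (rule sum_mono)
    fix i assume "i \<in> {..<dim_row A}"
    then have "(A *\<^sub>v x) $ i = (\<Sum>j\<in>{0..<dim_col A}. A $$ (i,j) * x $ j)"
      using assms by (simp add: scalar_prod_def)
    also have "{0..<dim_col A} = {..<dim_col A}" by auto
    finally show "\<bar>(A *\<^sub>v x) $ i\<bar> \<le> (\<Sum>j<dim_col A. \<bar>A $$ (i,j)\<bar> * \<bar>x $ j\<bar>)"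
      by (simp add: order_trans[OF sum_abs] abs_mult)
  qed
  finally show ?thesis .
qed

lemma op_norm_set_bdd: assumes "1 \<le> p"
  shows "bdd_above {lp_norm p (A *\<^sub>v x) | x. x \<in> carrier_vec (dim_col A) \<and> lp_norm p x \<le> 1}"
proof (rule bdd_aboveI)
  fix y assume "y \<in> {lp_norm p (A *\<^sub>v x) | x. x \<in> carrier_vec (dim_col A) \<and> lp_norm p x \<le> 1}"
  then obtain x where x: "x \<in> carrier_vec (dim_col A)" "lp_norm p x \<le> 1" and y: "y = lp_norm p (A *\<^sub>v x)" by auto
  have "y \<le> (\<Sum>i<dim_row A. \<Sum>j<dim_col A. \<bar>A $$ (i,j)\<bar> * \<bar>x $ j\<bar>)"
    using mv_bound[OF assms, of x A] x y by simp
  also have "\<dots> \<le> (\<Sum>i<dim_row A. \<Sum>j<dim_col A. \<bar>A $$ (i,j)\<bar> * 1)"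
    using x lp_ge_comp[OF assms, of _ x] by (intro sum_mono mult_left_mono) (auto intro: order_trans)
  finally show "y \<le> (\<Sum>i<dim_row A. \<Sum>j<dim_col A. \<bar>A $$ (i,j)\<bar> * 1)" .
qed

lemma op_norm_nonneg: assumes "1 \<le> p" shows "0 \<le> op_norm p A"
proof -
  have "lp_norm p (A *\<^sub>v 0\<^sub>v (dim_col A)) \<in> {lp_norm p (A *\<^sub>v x) | x. x \<in> carrier_vec (dim_col A) \<and> lp_norm p x \<le> 1}"
    using lp_le_sum[OF assms, of "0\<^sub>v (dim_col A)"] by auto
  then have "lp_norm p (A *\<^sub>v 0\<^sub>v (dim_col A)) \<le> op_norm p A"
    unfolding op_norm_def by (rule cSup_upper[OF _ op_norm_set_bdd[OF assms]])
  then show ?thesis using lp_nonneg order_trans by blast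
qed

lemma op_norm_bound: assumes "1 \<le> p" "A \<in> carrier_mat m k" "x \<in> carrier_vec k"
  shows "lp_norm p (A *\<^sub>v x) \<le> op_norm p A * lp_norm p x"
proof (cases "lp_norm p x = 0")
  case True
  then have "\<And>j. j < dim_vec x \<Longrightarrow> x $ j = 0" using lp_zero_imp[OF assms(1)] by blast
  then have "lp_norm p (A *\<^sub>v x) \<le> 0" using mv_bound[OF assms(1), of x A] assms by simp
  then show ?thesis using True by simp
next
  case False
  define t where "t = lp_norm p x"
  have t: "t > 0" using False lp_nonneg[of p x] t_def by simp
  define x' where "x' = (1/t) \<cdot>\<^sub>v x"
  have x': "x' \<in> carrier_vec (dim_col A)" "lp_norm p x' \<le> 1"
    using assms t by (auto simp: x'_def lp_smult t_def)
  have "lp_norm p (A *\<^sub>v x') \<le> op_norm p A"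
    unfolding op_norm_def using x' by (intro cSup_upper[OF _ op_norm_set_bdd[OF assms(1)]]) auto
  moreover have "A *\<^sub>v x' = (1/t) \<cdot>\<^sub>v (A *\<^sub>v x)" unfolding x'_def by (rule mult_mat_vec[OF assms(2,3)])
  ultimately have "(1/t) * lp_norm p (A *\<^sub>v x) \<le> op_norm p A" using t by (simp add: lp_smult[OF assms(1)])
  then show ?thesis using t by (simp add: t_def[symmetric] field_simps)
qed

lemma smult_mat_mult_vec: assumes "M \<in> carrier_mat m k" "v \<in> carrier_vec k"
  shows "((c::real) \<cdot>\<^sub>m M) *\<^sub>v v = c \<cdot>\<^sub>v (M *\<^sub>v v)"
  using assms by (intro eq_vecI) (auto simp: scalar_prod_def sum_distrib_left ac_simps)

lemma step_eq_gen:
  fixes A B C :: "real mat"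
  assumes A: "A \<in> carrier_mat m k" and B: "B \<in> carrier_mat m d" and C: "C \<in> carrier_mat d k"
    and x: "x \<in> carrier_vec k" and x': "x' \<in> carrier_vec k"
  shows "(A *\<^sub>v x + B *\<^sub>v map_vec \<phi> (C *\<^sub>v x)) - (A *\<^sub>v x' + B *\<^sub>v map_vec \<phi> (C *\<^sub>v x'))
    = (A + c \<cdot>\<^sub>m (B * C)) *\<^sub>v (x - x')
      + B *\<^sub>v (map_vec \<phi> (C *\<^sub>v x) - map_vec \<phi> (C *\<^sub>v x') - c \<cdot>\<^sub>v (C *\<^sub>v x - C *\<^sub>v x'))"
proof -
  have BC: "B * C \<in> carrier_mat m k" using B C by simp
  have 1: "(A + c \<cdot>\<^sub>m (B * C)) *\<^sub>v (x - x') = (A *\<^sub>v x - A *\<^sub>v x') + c \<cdot>\<^sub>v (B *\<^sub>v (C *\<^sub>v x - C *\<^sub>v x'))"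
  proof -
    have "(A + c \<cdot>\<^sub>m (B * C)) *\<^sub>v (x - x') = A *\<^sub>v (x - x') + (c \<cdot>\<^sub>m (B * C)) *\<^sub>v (x - x')"
      using A BC x x' by (intro add_mult_distrib_mat_vec) auto
    also have "(c \<cdot>\<^sub>m (B * C)) *\<^sub>v (x - x') = c \<cdot>\<^sub>v ((B * C) *\<^sub>v (x - x'))"
      using BC x x' by (intro smult_mat_mult_vec) auto
    also have "(B * C) *\<^sub>v (x - x') = B *\<^sub>v (C *\<^sub>v (x - x'))"
      using B C x x' by (intro assoc_mult_mat_vec) auto
    also have "C *\<^sub>v (x - x') = C *\<^sub>v x - C *\<^sub>v x'" using C x x' by (rule mult_minus_distrib_mat_vec)
    also have "A *\<^sub>v (x - x') = A *\<^sub>v x - A *\<^sub>v x'" using A x x' by (rule mult_minus_distrib_mat_vec)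
    finally show ?thesis .
  qed
  have 2: "B *\<^sub>v (u - u' - c \<cdot>\<^sub>v w) = B *\<^sub>v u - B *\<^sub>v u' - c \<cdot>\<^sub>v (B *\<^sub>v w)"
    if "u \<in> carrier_vec d" "u' \<in> carrier_vec d" "w \<in> carrier_vec d" for u u' w
  proof -
    have "B *\<^sub>v (u - u' - c \<cdot>\<^sub>v w) = B *\<^sub>v (u - u') - B *\<^sub>v (c \<cdot>\<^sub>v w)"
      using B that by (intro mult_minus_distrib_mat_vec) auto
    also have "B *\<^sub>v (u - u') = B *\<^sub>v u - B *\<^sub>v u'" using B that by (intro mult_minus_distrib_mat_vec) auto
    also have "B *\<^sub>v (c \<cdot>\<^sub>v w) = c \<cdot>\<^sub>v (B *\<^sub>v w)" using B that by (intro mult_mat_vec) auto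
    finally show ?thesis .
  qed
  have 3: "B *\<^sub>v (map_vec \<phi> (C *\<^sub>v x) - map_vec \<phi> (C *\<^sub>v x') - c \<cdot>\<^sub>v (C *\<^sub>v x - C *\<^sub>v x'))
     = B *\<^sub>v map_vec \<phi> (C *\<^sub>v x) - B *\<^sub>v map_vec \<phi> (C *\<^sub>v x') - c \<cdot>\<^sub>v (B *\<^sub>v (C *\<^sub>v x - C *\<^sub>v x'))"
    using C x x' by (intro 2) auto
  show ?thesis unfolding 1 3 using A B C x x'
    by (intro eq_vecI) auto
qed

lemma e_bound:
  fixes \<alpha> \<beta> :: real
  assumes "\<alpha> \<le> \<beta>" and sl: "\<forall>a b. a \<noteq> b \<longrightarrow> \<alpha> \<le> (\<phi> a - \<phi> b) / (a - b) \<and> (\<phi> a - \<phi> b) / (a - b) \<le> \<beta>"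
    and p: "1 \<le> p" and y: "y \<in> carrier_vec dd" and y': "y' \<in> carrier_vec dd"
  shows "lp_norm p (map_vec \<phi> y - map_vec \<phi> y' - ((\<alpha>+\<beta>)/2) \<cdot>\<^sub>v (y - y')) \<le> (\<beta>-\<alpha>)/2 * lp_norm p (y - y')"
proof -
  have pt: "\<bar>\<phi> a - \<phi> b - (\<alpha>+\<beta>)/2 * (a - b)\<bar> \<le> (\<beta>-\<alpha>)/2 * \<bar>a - b\<bar>" for a b
  proof (cases "a = b")
    case False
    define s where "s = (\<phi> a - \<phi> b) / (a - b)"
    have s: "\<alpha> \<le> s" "s \<le> \<beta>" using sl False s_def by auto
    have sb: "\<bar>s - (\<alpha>+\<beta>)/2\<bar> \<le> (\<beta>-\<alpha>)/2" using s by (simp add: abs_le_iff field_simps)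
    have "\<phi> a - \<phi> b = s * (a - b)" using False s_def by simp
    then have "\<phi> a - \<phi> b - (\<alpha>+\<beta>)/2 * (a - b) = (s - (\<alpha>+\<beta>)/2) * (a - b)" by (simp add: algebra_simps)
    then have "\<bar>\<phi> a - \<phi> b - (\<alpha>+\<beta>)/2 * (a - b)\<bar> = \<bar>s - (\<alpha>+\<beta>)/2\<bar> * \<bar>a - b\<bar>" by (simp add: abs_mult)
    also have "\<dots> \<le> (\<beta>-\<alpha>)/2 * \<bar>a - b\<bar>" using sb by (intro mult_right_mono) auto
    finally show ?thesis .
  qed (use assms in simp)
  have "lp_norm p (map_vec \<phi> y - map_vec \<phi> y' - ((\<alpha>+\<beta>)/2) \<cdot>\<^sub>v (y - y')) \<le> lp_norm p (((\<beta>-\<alpha>)/2) \<cdot>\<^sub>v (y - y'))"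
    using y y' pt assms by (intro lp_mono p) (auto simp: abs_mult)
  also have "\<dots> = (\<beta>-\<alpha>)/2 * lp_norm p (y - y')" using assms by (simp add: lp_smult)
  finally show ?thesis .
qed

lemma hchain_carrier: assumes "\<forall>k<L. Hh k \<in> carrier_mat (n (Suc k)) (n k)"
  shows "i + m \<le> L \<Longrightarrow> hchain n Hh i m \<in> carrier_mat (n (i+m)) (n i)"
  using assms by (induction m) (auto intro!: mult_carrier_mat)

lemma net_x_carrier:
  assumes "\<forall>k\<le>L. W k \<in> carrier_mat (d k) (n k)"
    and "\<forall>k<L. H k \<in> carrier_mat (n (Suc k)) (n k) \<and> G k \<in> carrier_mat (n (Suc k)) (d k)"
    and "x0 \<in> carrier_vec (n 0)"
  shows "k \<le> L \<Longrightarrow> net_x \<phi> W H G k x0 \<in> carrier_vec (n k)"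
proof (induction k)
  case (Suc k)
  then have "H k \<in> carrier_mat (n (Suc k)) (n k)" "G k \<in> carrier_mat (n (Suc k)) (d k)"
     "W k \<in> carrier_mat (d k) (n k)" "net_x \<phi> W H G k x0 \<in> carrier_vec (n k)" using assms by auto
  then show ?case by simp
qed (use assms in simp)

theorem theorem2:
  fixes \<alpha> \<beta> :: real and \<phi> :: "real \<Rightarrow> real" and L :: nat
    and n d :: "nat \<Rightarrow> nat" and W H G :: "nat \<Rightarrow> real mat" and p :: ereal
  assumes "0 \<le> \<alpha>" and "\<alpha> \<le> \<beta>"
    and "\<forall>a b. a \<noteq> b \<longrightarrow> \<alpha> \<le> (\<phi> a - \<phi> b) / (a - b) \<and> (\<phi> a - \<phi> b) / (a - b) \<le> \<beta>"
    and "L \<ge> 1"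
    and "\<forall>k\<le>L. W k \<in> carrier_mat (d k) (n k)"
    and "W L = 1\<^sub>m (n L)"
    and "\<forall>k<L. H k \<in> carrier_mat (n (Suc k)) (n k) \<and> G k \<in> carrier_mat (n (Suc k)) (d k)"
    and "1 \<le> p"
  shows "\<forall>k\<le>L. \<forall>x0 x0'. x0 \<in> carrier_vec (n 0) \<longrightarrow> x0' \<in> carrier_vec (n 0) \<longrightarrow>
           lp_norm p (net_y \<phi> W H G k x0 - net_y \<phi> W H G k x0')
             \<le> lip_m p \<alpha> \<beta> n W H G k * lp_norm p (x0 - x0')"
proof (intro allI impI)
  fix k :: nat and x0 x0' :: "real vec" assume kL: "k \<le> L" and x0: "x0 \<in> carrier_vec (n 0)" and x0': "x0' \<in> carrier_vec (n 0)"
  note ab = assms(2) and sl = assms(3) and Wc = assms(5) and HG = assms(7) and p = assms(8)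
  define X where "X = (\<lambda>k. net_x \<phi> W H G k x0)"
  define X' where "X' = (\<lambda>k. net_x \<phi> W H G k x0')"
  define c where "c = (\<alpha>+\<beta>)/2"
  define r where "r = (\<beta>-\<alpha>)/2"
  have r0: "0 \<le> r" using ab r_def by simp
  define Hh where "Hh = Hhat \<alpha> \<beta> W H G"
  define \<delta> where "\<delta> = (\<lambda>k. X k - X' k)"
  define e where "e = (\<lambda>k. map_vec \<phi> (W k *\<^sub>v X k) - map_vec \<phi> (W k *\<^sub>v X' k) - c \<cdot>\<^sub>v (W k *\<^sub>v X k - W k *\<^sub>v X' k))"
  have Xc: "X j \<in> carrier_vec (n j)" "X' j \<in> carrier_vec (n j)" if "j \<le> L" for j
    unfolding X_def X'_def using net_x_carrier[OF Wc HG] x0 x0' that by auto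
  have \<delta>c: "\<delta> j \<in> carrier_vec (n j)" if "j \<le> L" for j using Xc[OF that] by (simp add: \<delta>_def)
  have ec: "e j \<in> carrier_vec (d j)" if "j \<le> L" for j
  proof -
    have "W j \<in> carrier_mat (d j) (n j)" using Wc that by auto
    then show ?thesis using Xc[OF that] by (simp add: e_def)
  qed
  have Hhc: "\<forall>j<L. Hh j \<in> carrier_mat (n (Suc j)) (n j)"
    using Wc HG by (auto simp: Hh_def Hhat_def)
  have hc: "hchain n Hh i m \<in> carrier_mat (n (i+m)) (n i)" if "i + m \<le> L" for i m
    using hchain_carrier[OF Hhc] that by blast
  have step: "\<delta> (Suc j) = Hh j *\<^sub>v \<delta> j + G j *\<^sub>v e j" if "j < L" for j
  proof -
    have "H j \<in> carrier_mat (n (Suc j)) (n j)" "G j \<in> carrier_mat (n (Suc j)) (d j)"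
      "W j \<in> carrier_mat (d j) (n j)" using that Wc HG by auto
    from step_eq_gen[OF this Xc[of j], of \<phi> c] that
    show ?thesis by (simp add: \<delta>_def X_def X'_def e_def Hh_def Hhat_def c_def)
  qed
  have e_le: "lp_norm p (e j) \<le> r * lp_norm p (W j *\<^sub>v \<delta> j)" if "j \<le> L" for j
  proof -
    have "W j *\<^sub>v \<delta> j = W j *\<^sub>v X j - W j *\<^sub>v X' j" unfolding \<delta>_def
      using Wc that Xc[OF that] by (intro mult_minus_distrib_mat_vec) auto
    then show ?thesis unfolding e_def c_def r_def
      using e_bound[OF ab sl p, of "W j *\<^sub>v X j" "d j" "W j *\<^sub>v X' j"] Wc that Xc[OF that] by auto
  qed
  have Q: "\<forall>(M::real mat) rr. M \<in> carrier_mat rr (n j) \<longrightarrow> lp_norm p (M *\<^sub>v \<delta> j) \<le>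
      op_norm p (M * hchain n Hh 0 j) * lp_norm p (\<delta> 0)
      + (\<Sum>i<j. op_norm p (M * hchain n Hh (Suc i) (j - 1 - i) * G i) * lp_norm p (e i))" if "j \<le> L" for j
    using that
  proof (induction j)
    case 0
    show ?case using op_norm_bound[OF p _ \<delta>c[of 0]] by auto
  next
    case (Suc j)
    show ?case
    proof (intro allI impI)
      fix M :: "real mat" and rr assume M: "M \<in> carrier_mat rr (n (Suc j))"
      have jL: "j < L" "j \<le> L" using Suc by auto
      have Hj: "Hh j \<in> carrier_mat (n (Suc j)) (n j)" using Hhc jL by auto
      have Gj: "G j \<in> carrier_mat (n (Suc j)) (d j)" using HG jL by auto
      have MH: "M * Hh j \<in> carrier_mat rr (n j)" using M Hj by simp
      have "M *\<^sub>v \<delta> (Suc j) = M *\<^sub>v (Hh j *\<^sub>v \<delta> j) + M *\<^sub>v (G j *\<^sub>v e j)"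
        unfolding step[OF jL(1)] using M Hj Gj \<delta>c[OF jL(2)] ec[OF jL(2)]
        by (intro mult_add_distrib_mat_vec) auto
      also have "\<dots> = (M * Hh j) *\<^sub>v \<delta> j + (M * G j) *\<^sub>v e j"
        using M Hj Gj \<delta>c[OF jL(2)] ec[OF jL(2)] by simp
      finally have eq: "M *\<^sub>v \<delta> (Suc j) = (M * Hh j) *\<^sub>v \<delta> j + (M * G j) *\<^sub>v e j" .
      have "lp_norm p (M *\<^sub>v \<delta> (Suc j)) \<le> lp_norm p ((M * Hh j) *\<^sub>v \<delta> j) + lp_norm p ((M * G j) *\<^sub>v e j)"
        unfolding eq using M Hj Gj by (intro lp_triangle p) simp
      also have "lp_norm p ((M * G j) *\<^sub>v e j) \<le> op_norm p (M * G j) * lp_norm p (e j)"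
        using M Gj ec[OF jL(2)] by (intro op_norm_bound[OF p]) auto
      also have "lp_norm p ((M * Hh j) *\<^sub>v \<delta> j) \<le> op_norm p (M * Hh j * hchain n Hh 0 j) * lp_norm p (\<delta> 0)
        + (\<Sum>i<j. op_norm p (M * Hh j * hchain n Hh (Suc i) (j - 1 - i) * G i) * lp_norm p (e i))"
        using Suc.IH[OF jL(2)] MH by blast
      also have "M * Hh j * hchain n Hh 0 j = M * hchain n Hh 0 (Suc j)"
        using M Hj hc[of 0 j] jL by simp
      also have "(\<Sum>i<j. op_norm p (M * Hh j * hchain n Hh (Suc i) (j - 1 - i) * G i) * lp_norm p (e i))
         = (\<Sum>i<j. op_norm p (M * hchain n Hh (Suc i) (Suc j - 1 - i) * G i) * lp_norm p (e i))"
      proof (intro sum.cong refl)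
        fix i assume "i \<in> {..<j}"
        then have i: "i < j" by simp
        then have "Suc j - 1 - i = Suc (j - 1 - i)" "Suc i + (j - 1 - i) = j" by auto
        then have "M * hchain n Hh (Suc i) (Suc j - 1 - i) = M * (Hh j * hchain n Hh (Suc i) (j - 1 - i))"
          by simp
        also have "\<dots> = M * Hh j * hchain n Hh (Suc i) (j - 1 - i)"
          using M Hj hc[of "Suc i" "j - 1 - i"] i jL \<open>Suc i + (j - 1 - i) = j\<close>
          by (metis assoc_mult_mat)
        finally show "op_norm p (M * Hh j * hchain n Hh (Suc i) (j - 1 - i) * G i) * lp_norm p (e i)
          = op_norm p (M * hchain n Hh (Suc i) (Suc j - 1 - i) * G i) * lp_norm p (e i)" by simp
      qed
      also have "op_norm p (M * G j) = op_norm p (M * hchain n Hh (Suc j) (Suc j - 1 - j) * G j)"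
        using M by simp
      finally show "lp_norm p (M *\<^sub>v \<delta> (Suc j)) \<le> op_norm p (M * hchain n Hh 0 (Suc j)) * lp_norm p (\<delta> 0)
        + (\<Sum>i<Suc j. op_norm p (M * hchain n Hh (Suc i) (Suc j - 1 - i) * G i) * lp_norm p (e i))"
        by (simp add: algebra_simps)
    qed
  qed
  have main: "lp_norm p (W j *\<^sub>v \<delta> j) \<le> lip_m p \<alpha> \<beta> n W H G j * lp_norm p (\<delta> 0)" if "j \<le> L" for j
    using that
  proof (induction j rule: less_induct)
    case (less j)
    show ?case
    proof (cases j)
      case 0
      then show ?thesis using op_norm_bound[OF p _ \<delta>c[of 0]] Wc by auto
    next
      case (Suc j')
      have Wj: "W j \<in> carrier_mat (d j) (n j)" using Wc less by auto
      have "lp_norm p (W j *\<^sub>v \<delta> j) \<le> op_norm p (W j * hchain n Hh 0 j) * lp_norm p (\<delta> 0)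
        + (\<Sum>i<j. op_norm p (W j * hchain n Hh (Suc i) (j - 1 - i) * G i) * lp_norm p (e i))"
        using Q[OF less.prems] Wj by blast
      also have "(\<Sum>i<j. op_norm p (W j * hchain n Hh (Suc i) (j - 1 - i) * G i) * lp_norm p (e i))
        \<le> (\<Sum>i<j. op_norm p (W j * hchain n Hh (Suc i) (j - 1 - i) * G i) * (r * (lip_m p \<alpha> \<beta> n W H G i * lp_norm p (\<delta> 0))))"
      proof (intro sum_mono mult_left_mono op_norm_nonneg[OF p])
        fix i assume "i \<in> {..<j}"
        then have i: "i < j" "i \<le> L" using less by auto
        show "lp_norm p (e i) \<le> r * (lip_m p \<alpha> \<beta> n W H G i * lp_norm p (\<delta> 0))"
          using e_le[OF i(2)] less.IH[OF i] r0 by (meson mult_left_mono order_trans)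
      qed
      also have "op_norm p (W j * hchain n Hh 0 j) * lp_norm p (\<delta> 0)
        + (\<Sum>i<j. op_norm p (W j * hchain n Hh (Suc i) (j - 1 - i) * G i) * (r * (lip_m p \<alpha> \<beta> n W H G i * lp_norm p (\<delta> 0))))
        = lip_m p \<alpha> \<beta> n W H G j * lp_norm p (\<delta> 0)"
        unfolding Suc lip_m.simps r_def Hh_def
        by (simp add: lessThan_Suc_atMost atLeast0AtMost sum_distrib_left sum_distrib_right algebra_simps)
      finally show ?thesis by simp
    qed
  qed
  have "net_y \<phi> W H G k x0 - net_y \<phi> W H G k x0' = W k *\<^sub>v \<delta> k"
    unfolding net_y_def \<delta>_def X_def X'_def using Wc kL Xc[OF kL]
    by (intro mult_minus_distrib_mat_vec[symmetric]) (auto simp: X_def X'_def)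
  moreover have "\<delta> 0 = x0 - x0'" by (simp add: \<delta>_def X_def X'_def)
  ultimately show "lp_norm p (net_y \<phi> W H G k x0 - net_y \<phi> W H G k x0') \<le> lip_m p \<alpha> \<beta> n W H G k * lp_norm p (x0 - x0')"
    using main[OF kL] by simp
qed

end
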